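(* Let $n\ge1$, let $\lambda=(\lambda_1,\dots,\lambda_l)$ and $\mu=(\mu_1,\dots,\mu_m)$ be decompositions of $n+1$ with $1<\mu_m\le\lambda_l$, and let $\mu'=(\mu_1,\dots,\mu_{m-1},\mu_m-1,1)$. Let $G=\langle A_{2,n}(S_{\lambda|\mu})\rangle$ and let $H$ be the subgroup of $G$ generated by $S_{\lambda|\mu'}$ (note $S_{\lambda|\mu'}\subseteq S_{\lambda|\mu}$). Then the set of right cosets of $H$ in $G$ is $$\{H\}\cup\{H\,y_nx_n^{\varepsilon_n}y_{n-1}x_{n-1}^{\varepsilon_{n-1}}\cdots y_kx_k^{\varepsilon_k}\ :\ n-\mu_m+2\le k\le n,\ \varepsilon_j\in\{0,1\}\}.$$
   Context: A decomposition of $N$ is a finite sequence of positive integers with sum $N$. The stopover set of $\lambda=(\lambda_1,\dots,\lambda_l)$ is $\overline{s}(\lambda)=\{\lambda_1,\lambda_1+\lambda_2,\dots,\lambda_1+\dots+\lambda_{l-1}\}$, and $S_{\lambda|\mu}=\{x_i : 1\le i\le n,\ i\notin\overline{s}(\lambda)\}\cup\{y_j: 1\le j\le n,\ j\notin\overline{s}(\mu)\}$. The group $\langle A_{2,n}\rangle$ has generators $X=\{x_1,\dots,x_n,y_1,\dots,y_n\}$ and relations: $z^2=e$ ($z\in X$); $(x_ix_{i+1})^4=(y_iy_{i+1})^4=e$ ($1\le i\le n-1$); $(x_iy_i)^3=e$ ($1\le i\le n$); $(zt)^2=e$ for every other pair of distinct $z,t\in X$; $(x_ix_{i+1}y_i)^3=(x_ix_{i+1}y_{i+1})^3=(x_iy_iy_{i+1})^3=(x_{i+1}y_iy_{i+1})^3=e$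 ($1\le i\le n-1$); $(x_ix_{i+1}x_{i+2})^4=(y_iy_{i+1}y_{i+2})^4=e$ ($1\le i\le n-2$). For $S\subseteq X$, $\langle A_{2,n}(S)\rangle$ is the group generated by $S$ subject to exactly those relations above involving only elements of $S$. *)

theory Defs
  imports "HOL-Algebra.Algebra"
begin

datatype gen = Xg nat | Yg nat

definition gens :: "nat \<Rightarrow> gen set" where
  "gens n = {Xg i | i. 1 \<le> i \<and> i \<le> n} \<union> {Yg j | j. 1 \<le> j \<and> j \<le> n}"

definition wpow :: "'a list \<Rightarrow> nat \<Rightarrow> 'a list" where
  "wpow w k = concat (replicate k w)"

text \<open>Pairs of generators with a relation other than commuting.\<close>
definition special_pair :: "gen \<Rightarrow> gen \<Rightarrow> bool" where
  "special_pair z t \<longleftrightarrow> (\<exists>i. {z, t} = {Xg i, Xg (Suc i)} \<or> {z, t} = {Yg i, Yg (Suc i)}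
                              \<or> {z, t} = {Xg i, Yg i})"

definition relators :: "nat \<Rightarrow> gen list set" where
  "relators n =
     {[z, z] | z. z \<in> gens n}
   \<union> {wpow [Xg i, Xg (i+1)] 4 | i. 1 \<le> i \<and> i + 1 \<le> n}
   \<union> {wpow [Yg i, Yg (i+1)] 4 | i. 1 \<le> i \<and> i + 1 \<le> n}
   \<union> {wpow [Xg i, Yg i] 3 | i. 1 \<le> i \<and> i \<le> n}
   \<union> {wpow [z, t] 2 | z t. z \<in> gens n \<and> t \<in> gens n \<and> z \<noteq> t \<and> \<not> special_pair z t}
   \<union> {wpow [Xg i, Xg (i+1), Yg i] 3 | i. 1 \<le> i \<and> i + 1 \<le> n}
   \<union> {wpow [Xg i, Xg (i+1), Yg (i+1)] 3 | i. 1 \<le> i \<and> i + 1 \<le> n}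
   \<union> {wpow [Xg i, Yg i, Yg (i+1)] 3 | i. 1 \<le> i \<and> i + 1 \<le> n}
   \<union> {wpow [Xg (i+1), Yg i, Yg (i+1)] 3 | i. 1 \<le> i \<and> i + 1 \<le> n}
   \<union> {wpow [Xg i, Xg (i+1), Xg (i+2)] 4 | i. 1 \<le> i \<and> i + 2 \<le> n}
   \<union> {wpow [Yg i, Yg (i+1), Yg (i+2)] 4 | i. 1 \<le> i \<and> i + 2 \<le> n}"

definition relators_on :: "nat \<Rightarrow> gen set \<Rightarrow> gen list set" where
  "relators_on n S = {r \<in> relators n. set r \<subseteq> S}"

text \<open>Group presented by generators S and relators R: words over S modulo the
  equivalence generated by inserting/deleting relators (since z^2 = e is among
  the relators for every generator, no formal inverses are needed).\<close>
definition rel_step :: "'a list set \<Rightarrow> ('a list \<times> 'a list) set" where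
  "rel_step R = {(u @ r @ v, u @ v) | u r v. r \<in> R}"

definition word_eq :: "'a list set \<Rightarrow> ('a list \<times> 'a list) set" where
  "word_eq R = (rel_step R \<union> (rel_step R)\<inverse>)\<^sup>*"

definition presented_group :: "'a set \<Rightarrow> 'a list set \<Rightarrow> 'a list set monoid" where
  "presented_group S R =
     \<lparr> carrier = lists S // word_eq R,
       monoid.mult = (\<lambda>A B. \<Union>a\<in>A. \<Union>b\<in>B. word_eq R `` {a @ b}),
       monoid.one = word_eq R `` {[]} \<rparr>"

definition word_elt :: "'a list set \<Rightarrow> 'a list \<Rightarrow> 'a list set" where
  "word_elt R w = word_eq R `` {w}"

definition A2 :: "nat \<Rightarrow> gen set \<Rightarrow> gen list set monoid" where
  "A2 n S = presented_group S (relators_on n S)"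

definition decomposition :: "nat list \<Rightarrow> nat \<Rightarrow> bool" where
  "decomposition lam N \<longleftrightarrow> (\<forall>a \<in> set lam. 0 < a) \<and> sum_list lam = N"

definition stopover :: "nat list \<Rightarrow> nat set" where
  "stopover lam = {sum_list (take i lam) | i. 1 \<le> i \<and> i \<le> length lam - 1}"

definition S_set :: "nat \<Rightarrow> nat list \<Rightarrow> nat list \<Rightarrow> gen set" where
  "S_set n lam mu = {Xg i | i. 1 \<le> i \<and> i \<le> n \<and> i \<notin> stopover lam}
                  \<union> {Yg j | j. 1 \<le> j \<and> j \<le> n \<and> j \<notin> stopover mu}"

definition coset_word :: "nat \<Rightarrow> nat \<Rightarrow> (nat \<Rightarrow> bool) \<Rightarrow> gen list" where
  "coset_word n k eps = concat (map (\<lambda>j. Yg j # (if eps j then [Xg j] else [])) (rev [k..<n+1]))"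

end

theory Submission
  imports Defs
begin


locale pres =
  fixes n :: nat and S :: "gen set"
  assumes S_gens: "S \<subseteq> gens n"
begin

abbreviation "R \<equiv> relators_on n S"
abbreviation "E \<equiv> word_eq R"

lemma E_refl: "(w, w) \<in> E" by (simp add: word_eq_def)

lemma E_trans: "(x, y) \<in> E \<Longrightarrow> (y, z) \<in> E \<Longrightarrow> (x, z) \<in> E"
  unfolding word_eq_def by (rule rtrancl_trans)

lemma Etr: "(x, y) \<in> E \<Longrightarrow> (y', z) \<in> E \<Longrightarrow> y = y' \<Longrightarrow> (x, z) \<in> E"
  using E_trans by blast

lemma E_sym: "(x, y) \<in> E \<Longrightarrow> (y, x) \<in> E"
proof -
  assume "(x, y) \<in> E"
  then show "(y, x) \<in> E" unfolding word_eq_def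
  proof (induction rule: rtrancl_induct)
    case base then show ?case by simp
  next
    case (step y z)
    then have "(z, y) \<in> (rel_step R \<union> (rel_step R)\<inverse>)" by auto
    then show ?case using step(3) by (meson converse_rtrancl_into_rtrancl)
  qed
qed

lemma step_ctx: "(a, b) \<in> rel_step R \<Longrightarrow> (u @ a @ v, u @ b @ v) \<in> rel_step R"
  unfolding rel_step_def
proof safe
  fix x r y assume "r \<in> R"
  then show "\<exists>u' r' v'. (u @ (x @ r @ y) @ v, u @ (x @ y) @ v) = (u' @ r' @ v', u' @ v') \<and> r' \<in> R"
    by (rule_tac x="u@x" in exI, rule_tac x=r in exI, rule_tac x="y@v" in exI) simp
qed

lemma E_ctx: "(a, b) \<in> E \<Longrightarrow> (u @ a @ v, u @ b @ v) \<in> E"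
proof -
  assume "(a, b) \<in> E"
  then show ?thesis unfolding word_eq_def
  proof (induction rule: rtrancl_induct)
    case base then show ?case by simp
  next
    case (step y z)
    then have "(u @ y @ v, u @ z @ v) \<in> (rel_step R \<union> (rel_step R)\<inverse>)"
      using step_ctx by auto
    then show ?case using step(3) by (meson rtrancl.rtrancl_into_rtrancl)
  qed
qed

lemma E_rel: "r \<in> R \<Longrightarrow> (u @ r @ v, u @ v) \<in> E"
  unfolding word_eq_def rel_step_def by blast

lemma gensX: "Xg i \<in> gens n \<longleftrightarrow> 1 \<le> i \<and> i \<le> n" by (auto simp: gens_def)
lemma gensY: "Yg i \<in> gens n \<longleftrightarrow> 1 \<le> i \<and> i \<le> n" by (auto simp: gens_def)

lemma SX: "Xg i \<in> S \<Longrightarrow> 1 \<le> i \<and> i \<le> n" using S_gens gensX by blast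
lemma SY: "Yg i \<in> S \<Longrightarrow> 1 \<le> i \<and> i \<le> n" using S_gens gensY by blast

lemma R_sq: "z \<in> S \<Longrightarrow> [z, z] \<in> R"
proof -
  assume z: "z \<in> S"
  have "[z, z] \<in> relators n" unfolding relators_def using S_gens z by blast
  then show ?thesis unfolding relators_on_def using z by auto
qed

lemma cancel: "set w \<subseteq> S \<Longrightarrow> (rev w @ w, []) \<in> E \<and> (w @ rev w, []) \<in> E"
proof (induction w)
  case Nil then show ?case by (simp add: E_refl)
next
  case (Cons z w)
  then have z: "z \<in> S" and IH: "(rev w @ w, []) \<in> E" "(w @ rev w, []) \<in> E" by auto
  have a: "(rev w @ [z,z] @ w, rev w @ [] @ w) \<in> E" using E_rel[OF R_sq[OF z]] by simp
  have b: "([z] @ (w @ rev w) @ [z], [z] @ [] @ [z]) \<in> E" using E_ctx[OF IH(2)] by blast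
  have c: "([z] @ [] @ [z], []) \<in> E" using E_rel[OF R_sq[OF z], of "[]" "[]"] by simp
  have 1: "(rev (z # w) @ z # w, []) \<in> E" using E_trans[OF a] IH(1) by simp
  have 2: "((z # w) @ rev (z # w), []) \<in> E" using E_trans[OF b c] by simp
  show ?case using 1 2 by blast
qed

lemma R_set: "r \<in> R \<Longrightarrow> set r \<subseteq> S" by (simp add: relators_on_def)

lemma triv_rel: "r \<in> R \<Longrightarrow> (r, []) \<in> E" using E_rel[of r "[]" "[]"] by simp

lemma triv_rev: "(t, []) \<in> E \<Longrightarrow> set t \<subseteq> S \<Longrightarrow> (rev t, []) \<in> E"
proof -
  assume t: "(t, []) \<in> E" and st: "set t \<subseteq> S"
  have "(rev t @ t @ [], rev t @ [] @ []) \<in> E" using E_ctx[OF t] by blast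
  then have "(rev t, rev t @ t) \<in> E" using E_sym by simp
  then show ?thesis using cancel[OF st] E_trans by blast
qed

lemma triv_rot: "(p @ q, []) \<in> E \<Longrightarrow> set q \<subseteq> S \<Longrightarrow> (q @ p, []) \<in> E"
proof -
  assume t: "(p @ q, []) \<in> E" and sq: "set q \<subseteq> S"
  have "(q @ (p @ q) @ rev q, q @ [] @ rev q) \<in> E" using E_ctx[OF t] by blast
  then have 1: "(q @ p @ q @ rev q, q @ rev q) \<in> E" by simp
  have "((q @ p) @ (q @ rev q) @ [], (q @ p) @ [] @ []) \<in> E" using E_ctx[OF conjunct2[OF cancel[OF sq]]] by blast
  then have 2: "(q @ p, q @ p @ q @ rev q) \<in> E" using E_sym by simp
  show ?thesis using E_trans[OF E_trans[OF 2 1] conjunct2[OF cancel[OF sq]]] .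
qed

lemma triv_move: "(l @ rev l', []) \<in> E \<Longrightarrow> set l' \<subseteq> S \<Longrightarrow> (u @ l @ v, u @ l' @ v) \<in> E"
proof -
  assume t: "(l @ rev l', []) \<in> E" and sl: "set l' \<subseteq> S"
  have "(l @ (rev l' @ l') @ [], l @ [] @ []) \<in> E" using E_ctx[OF conjunct1[OF cancel[OF sl]]] by blast
  then have 1: "(l, l @ rev l' @ l') \<in> E" using E_sym by simp
  have "([] @ (l @ rev l') @ l', [] @ [] @ l') \<in> E" using E_ctx[OF t] by blast
  then have 2: "(l @ rev l' @ l', l') \<in> E" by simp
  show ?thesis using E_ctx[OF E_trans[OF 1 2]] .
qed

lemma stepR: "r \<in> R \<Longrightarrow> p @ q = r \<or> p @ q = rev r \<Longrightarrow> q @ p = l @ rev l' \<Longrightarrow> set l' \<subseteq> S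
   \<Longrightarrow> (u @ l @ v, u @ l' @ v) \<in> E"
proof -
  assume r: "r \<in> R" and pq: "p @ q = r \<or> p @ q = rev r" and qp: "q @ p = l @ rev l'" and sl: "set l' \<subseteq> S"
  have sr: "set r \<subseteq> S" using R_set[OF r] .
  have "(p @ q, []) \<in> E" using pq triv_rel[OF r] triv_rev[OF triv_rel[OF r] sr] by auto
  moreover have "set (p @ q) \<subseteq> S" using pq sr by (metis set_rev)
  then have "set q \<subseteq> S" by simp
  ultimately have "(q @ p, []) \<in> E" by (rule triv_rot)
  then show ?thesis using triv_move[OF _ sl] qp by simp
qed

lemma sp_XX: "special_pair (Xg i) (Xg j) \<longleftrightarrow> j = Suc i \<or> i = Suc j"
  by (auto simp: special_pair_def doubleton_eq_iff)
lemma sp_YY: "special_pair (Yg i) (Yg j) \<longleftrightarrow> j = Suc i \<or> i = Suc j"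
  by (auto simp: special_pair_def doubleton_eq_iff)
lemma sp_XY: "special_pair (Xg i) (Yg j) \<longleftrightarrow> i = j"
  by (auto simp: special_pair_def doubleton_eq_iff)
lemma sp_YX: "special_pair (Yg i) (Xg j) \<longleftrightarrow> i = j"
  by (auto simp: special_pair_def doubleton_eq_iff)

definition cm :: "gen \<Rightarrow> gen \<Rightarrow> bool" where
  "cm z t \<longleftrightarrow> z \<in> S \<and> t \<in> S \<and> (z = t \<or> \<not> special_pair z t)"

lemma R_comm: "z \<in> S \<Longrightarrow> t \<in> S \<Longrightarrow> z \<noteq> t \<Longrightarrow> \<not> special_pair z t \<Longrightarrow> [z, t, z, t] \<in> R"
proof -
  assume a: "z \<in> S" "t \<in> S" "z \<noteq> t" "\<not> special_pair z t"
  have "wpow [z, t] 2 \<in> relators n" unfolding relators_def using S_gens a by blast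
  moreover have "wpow [z, t] 2 = [z, t, z, t]" by (simp add: wpow_def numeral_2_eq_2)
  ultimately show ?thesis unfolding relators_on_def using a by auto
qed

lemma swap: "cm z t \<Longrightarrow> (u @ [z, t] @ v, u @ [t, z] @ v) \<in> E"
proof -
  assume c: "cm z t"
  show ?thesis
  proof (cases "z = t")
    case True then show ?thesis by (simp add: E_refl)
  next
    case False
    then have r: "[z, t, z, t] \<in> R" using c R_comm by (auto simp: cm_def)
    show ?thesis by (rule stepR[OF r, of "[z,t,z,t]" "[]"]) (use c in \<open>auto simp: cm_def\<close>)
  qed
qed

lemma push: "\<forall>t\<in>set P. cm z t \<Longrightarrow> (u @ [z] @ P @ v, u @ P @ [z] @ v) \<in> E"
proof (induction P arbitrary: u)
  case Nil then show ?case by (simp add: E_refl)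
next
  case (Cons t P)
  have 1: "(u @ z # t # P @ v, u @ t # z # P @ v) \<in> E" using swap[of z t u "P @ v"] Cons.prems by simp
  have 2: "(u @ t # z # P @ v, u @ t # P @ z # v) \<in> E" using Cons.IH[of "u @ [t]"] Cons.prems by simp
  show ?case using E_trans[OF 1 2] by simp
qed

lemma pushw: "\<forall>z\<in>set g. \<forall>t\<in>set P. cm z t \<Longrightarrow> (u @ g @ P @ v, u @ P @ g @ v) \<in> E"
proof (induction g arbitrary: u)
  case Nil then show ?case by (simp add: E_refl)
next
  case (Cons z g)
  have 1: "(u @ z # g @ P @ v, u @ z # P @ g @ v) \<in> E"
    using Cons.IH[of "u @ [z]"] Cons.prems by simp
  have 2: "(u @ z # P @ g @ v, u @ P @ z # g @ v) \<in> E" using push[of P z u "g @ v"] Cons.prems by simp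
  show ?case using E_trans[OF 1 2] by simp
qed

lemma R_xx:
  assumes "Xg i \<in> S" and "Xg (Suc i) \<in> S"
  shows "[Xg i, Xg (Suc i), Xg i, Xg (Suc i), Xg i, Xg (Suc i), Xg i, Xg (Suc i)] \<in> R"
proof -
  have b: "1 \<le> i" "i + 1 \<le> n" using SX[OF assms(1)] SX[OF assms(2)] by auto
  have "wpow [Xg i, Xg (i+1)] 4 \<in> relators n" unfolding relators_def using b by blast
  moreover have "wpow [Xg i, Xg (i+1)] 4 = [Xg i, Xg (Suc i), Xg i, Xg (Suc i), Xg i, Xg (Suc i), Xg i, Xg (Suc i)]" by (simp add: wpow_def numeral_eq_Suc)
  ultimately show ?thesis using assms unfolding relators_on_def by auto
qed

lemma R_yy:
  assumes "Yg i \<in> S" and "Yg (Suc i) \<in> S"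
  shows "[Yg i, Yg (Suc i), Yg i, Yg (Suc i), Yg i, Yg (Suc i), Yg i, Yg (Suc i)] \<in> R"
proof -
  have b: "1 \<le> i" "i + 1 \<le> n" using SY[OF assms(1)] SY[OF assms(2)] by auto
  have "wpow [Yg i, Yg (i+1)] 4 \<in> relators n" unfolding relators_def using b by blast
  moreover have "wpow [Yg i, Yg (i+1)] 4 = [Yg i, Yg (Suc i), Yg i, Yg (Suc i), Yg i, Yg (Suc i), Yg i, Yg (Suc i)]" by (simp add: wpow_def numeral_eq_Suc)
  ultimately show ?thesis using assms unfolding relators_on_def by auto
qed

lemma R_acb:
  assumes "Xg i \<in> S" and "Yg i \<in> S" and "Xg (Suc i) \<in> S"
  shows "[Xg i, Xg (Suc i), Yg i, Xg i, Xg (Suc i), Yg i, Xg i, Xg (Suc i), Yg i] \<in> R"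
proof -
  have b: "1 \<le> i" "i + 1 \<le> n" using SX[OF assms(1)] SX[OF assms(3)] by auto
  have "wpow [Xg i, Xg (i+1), Yg i] 3 \<in> relators n" unfolding relators_def using b by blast
  moreover have "wpow [Xg i, Xg (i+1), Yg i] 3 = [Xg i, Xg (Suc i), Yg i, Xg i, Xg (Suc i), Yg i, Xg i, Xg (Suc i), Yg i]" by (simp add: wpow_def numeral_eq_Suc)
  ultimately show ?thesis using assms unfolding relators_on_def by auto
qed

lemma R_acd:
  assumes "Xg i \<in> S" and "Xg (Suc i) \<in> S" and "Yg (Suc i) \<in> S"
  shows "[Xg i, Xg (Suc i), Yg (Suc i), Xg i, Xg (Suc i), Yg (Suc i), Xg i, Xg (Suc i), Yg (Suc i)] \<in> R"
proof -
  have b: "1 \<le> i" "i + 1 \<le> n" using SX[OF assms(1)] SX[OF assms(2)] by auto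
  have "wpow [Xg i, Xg (i+1), Yg (i+1)] 3 \<in> relators n" unfolding relators_def using b by blast
  moreover have "wpow [Xg i, Xg (i+1), Yg (i+1)] 3 = [Xg i, Xg (Suc i), Yg (Suc i), Xg i, Xg (Suc i), Yg (Suc i), Xg i, Xg (Suc i), Yg (Suc i)]" by (simp add: wpow_def numeral_eq_Suc)
  ultimately show ?thesis using assms unfolding relators_on_def by auto
qed

lemma R_abd:
  assumes "Xg i \<in> S" and "Yg i \<in> S" and "Yg (Suc i) \<in> S"
  shows "[Xg i, Yg i, Yg (Suc i), Xg i, Yg i, Yg (Suc i), Xg i, Yg i, Yg (Suc i)] \<in> R"
proof -
  have b: "1 \<le> i" "i + 1 \<le> n" using SX[OF assms(1)] SY[OF assms(3)] by auto
  have "wpow [Xg i, Yg i, Yg (i+1)] 3 \<in> relators n" unfolding relators_def using b by blast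
  moreover have "wpow [Xg i, Yg i, Yg (i+1)] 3 = [Xg i, Yg i, Yg (Suc i), Xg i, Yg i, Yg (Suc i), Xg i, Yg i, Yg (Suc i)]" by (simp add: wpow_def numeral_eq_Suc)
  ultimately show ?thesis using assms unfolding relators_on_def by auto
qed

lemma R_cbd:
  assumes "Yg i \<in> S" and "Xg (Suc i) \<in> S" and "Yg (Suc i) \<in> S"
  shows "[Xg (Suc i), Yg i, Yg (Suc i), Xg (Suc i), Yg i, Yg (Suc i), Xg (Suc i), Yg i, Yg (Suc i)] \<in> R"
proof -
  have b: "1 \<le> i" "i + 1 \<le> n" using SY[OF assms(1)] SX[OF assms(2)] by auto
  have "wpow [Xg (i+1), Yg i, Yg (i+1)] 3 \<in> relators n" unfolding relators_def using b by blast
  moreover have "wpow [Xg (i+1), Yg i, Yg (i+1)] 3 = [Xg (Suc i), Yg i, Yg (Suc i), Xg (Suc i), Yg i, Yg (Suc i), Xg (Suc i), Yg i, Yg (Suc i)]" by (simp add: wpow_def numeral_eq_Suc)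
  ultimately show ?thesis using assms unfolding relators_on_def by auto
qed

lemma R_xyi:
  assumes "Xg j \<in> S" "Yg j \<in> S"
  shows "[Xg j, Yg j, Xg j, Yg j, Xg j, Yg j] \<in> R"
proof -
  have b: "1 \<le> j" "j \<le> n" using SX[OF assms(1)] by auto
  have "wpow [Xg j, Yg j] 3 \<in> relators n" unfolding relators_def using b by blast
  moreover have "wpow [Xg j, Yg j] 3 = [Xg j, Yg j, Xg j, Yg j, Xg j, Yg j]" by (simp add: wpow_def numeral_eq_Suc)
  ultimately show ?thesis using assms unfolding relators_on_def by auto
qed

lemma R_xy0: "Xg i \<in> S \<Longrightarrow> Yg i \<in> S \<Longrightarrow> [Xg i, Yg i, Xg i, Yg i, Xg i, Yg i] \<in> R" by (rule R_xyi)
lemma R_xy1: "Xg (Suc i) \<in> S \<Longrightarrow> Yg (Suc i) \<in> S \<Longrightarrow> [Xg (Suc i), Yg (Suc i), Xg (Suc i), Yg (Suc i), Xg (Suc i), Yg (Suc i)] \<in> R" by (rule R_xyi)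
lemma R_ad: "Xg i \<in> S \<Longrightarrow> Yg (Suc i) \<in> S \<Longrightarrow> [Xg i, Yg (Suc i), Xg i, Yg (Suc i)] \<in> R" by (rule R_comm) (auto simp: sp_XY)
lemma R_bc: "Yg i \<in> S \<Longrightarrow> Xg (Suc i) \<in> S \<Longrightarrow> [Yg i, Xg (Suc i), Yg i, Xg (Suc i)] \<in> R" by (rule R_comm) (auto simp: sp_YX)


lemma I1:
  assumes "Xg i \<in> S" and "Xg (Suc i) \<in> S" and "Yg (Suc i) \<in> S"
  shows "(u @ [Yg (Suc i), Xg (Suc i), Xg i] @ v, u @ [Xg i, Xg (Suc i), Xg i, Xg (Suc i), Yg (Suc i), Xg (Suc i)] @ v) \<in> E"
proof -
  have s0: "(u @ [Yg (Suc i), Xg (Suc i), Xg i] @ v, u @ [Xg i, Xg (Suc i), Yg (Suc i), Xg i, Xg (Suc i), Yg (Suc i)] @ v) \<in> E"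
    using stepR[of "[Xg i, Xg (Suc i), Yg (Suc i), Xg i, Xg (Suc i), Yg (Suc i), Xg i, Xg (Suc i), Yg (Suc i)]" "[]" "[Yg (Suc i), Xg (Suc i), Xg i, Yg (Suc i), Xg (Suc i), Xg i, Yg (Suc i), Xg (Suc i), Xg i]" "[Yg (Suc i), Xg (Suc i), Xg i]" "[Xg i, Xg (Suc i), Yg (Suc i), Xg i, Xg (Suc i), Yg (Suc i)]" "u @ []" "[] @ v"] by (simp add: R_acd assms)
  have s1: "(u @ [Xg i, Xg (Suc i), Yg (Suc i), Xg i, Xg (Suc i), Yg (Suc i)] @ v, u @ [Xg i, Xg (Suc i), Xg i, Yg (Suc i), Xg (Suc i), Yg (Suc i)] @ v) \<in> E"
    using stepR[of "[Xg i, Yg (Suc i), Xg i, Yg (Suc i)]" "[Xg i]" "[Yg (Suc i), Xg i, Yg (Suc i)]" "[Yg (Suc i), Xg i]" "[Xg i, Yg (Suc i)]" "u @ [Xg i, Xg (Suc i)]" "[Xg (Suc i), Yg (Suc i)] @ v"] by (simp add: R_ad assms)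
  have s2: "(u @ [Xg i, Xg (Suc i), Xg i, Yg (Suc i), Xg (Suc i), Yg (Suc i)] @ v, u @ [Xg i, Xg (Suc i), Xg i, Xg (Suc i), Yg (Suc i), Xg (Suc i)] @ v) \<in> E"
    using stepR[of "[Xg (Suc i), Yg (Suc i), Xg (Suc i), Yg (Suc i), Xg (Suc i), Yg (Suc i)]" "[Xg (Suc i)]" "[Yg (Suc i), Xg (Suc i), Yg (Suc i), Xg (Suc i), Yg (Suc i)]" "[Yg (Suc i), Xg (Suc i), Yg (Suc i)]" "[Xg (Suc i), Yg (Suc i), Xg (Suc i)]" "u @ [Xg i, Xg (Suc i), Xg i]" "[] @ v"] by (simp add: R_xy1 assms)
  show ?thesis using E_trans[OF E_trans[OF s0 s1] s2] .
qed

lemma I2a: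
  assumes "Xg i \<in> S" and "Yg i \<in> S" and "Xg (Suc i) \<in> S" and "Yg (Suc i) \<in> S"
  shows "(u @ [Yg (Suc i), Yg i, Xg i, Xg (Suc i)] @ v, u @ [Xg (Suc i), Xg i, Xg (Suc i), Yg (Suc i), Yg i, Xg i] @ v) \<in> E"
proof -
  have s0: "(u @ [Yg (Suc i), Yg i, Xg i, Xg (Suc i)] @ v, u @ [Xg (Suc i), Yg (Suc i), Xg (Suc i), Yg (Suc i), Xg (Suc i), Yg i, Xg i, Xg (Suc i)] @ v) \<in> E"
    using stepR[of "[Xg (Suc i), Yg (Suc i), Xg (Suc i), Yg (Suc i), Xg (Suc i), Yg (Suc i)]" "[Xg (Suc i)]" "[Yg (Suc i), Xg (Suc i), Yg (Suc i), Xg (Suc i), Yg (Suc i)]" "[Yg (Suc i)]" "[Xg (Suc i), Yg (Suc i), Xg (Suc i), Yg (Suc i), Xg (Suc i)]" "u @ []" "[Yg i, Xg i, Xg (Suc i)] @ v"] by (simp add: R_xy1 assms)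
  have s1: "(u @ [Xg (Suc i), Yg (Suc i), Xg (Suc i), Yg (Suc i), Xg (Suc i), Yg i, Xg i, Xg (Suc i)] @ v, u @ [Xg (Suc i), Yg (Suc i), Xg (Suc i), Xg i, Yg (Suc i), Xg i, Xg (Suc i), Yg i, Xg i, Xg (Suc i)] @ v) \<in> E"
    using stepR[of "[Xg i, Yg (Suc i), Xg i, Yg (Suc i)]" "[Xg i]" "[Yg (Suc i), Xg i, Yg (Suc i)]" "[Yg (Suc i)]" "[Xg i, Yg (Suc i), Xg i]" "u @ [Xg (Suc i), Yg (Suc i), Xg (Suc i)]" "[Xg (Suc i), Yg i, Xg i, Xg (Suc i)] @ v"] by (simp add: R_ad assms)
  have s2: "(u @ [Xg (Suc i), Yg (Suc i), Xg (Suc i), Xg i, Yg (Suc i), Xg i, Xg (Suc i), Yg i, Xg i, Xg (Suc i)] @ v, u @ [Xg (Suc i), Xg i, Xg (Suc i), Yg (Suc i), Xg i, Xg (Suc i), Xg i, Xg (Suc i), Yg i, Xg i, Xg (Suc i)] @ v) \<in> E"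
    using stepR[of "[Xg i, Xg (Suc i), Yg (Suc i), Xg i, Xg (Suc i), Yg (Suc i), Xg i, Xg (Suc i), Yg (Suc i)]" "[]" "[Yg (Suc i), Xg (Suc i), Xg i, Yg (Suc i), Xg (Suc i), Xg i, Yg (Suc i), Xg (Suc i), Xg i]" "[Yg (Suc i), Xg (Suc i), Xg i, Yg (Suc i)]" "[Xg i, Xg (Suc i), Yg (Suc i), Xg i, Xg (Suc i)]" "u @ [Xg (Suc i)]" "[Xg i, Xg (Suc i), Yg i, Xg i, Xg (Suc i)] @ v"] by (simp add: R_acd assms)
  have s3: "(u @ [Xg (Suc i), Xg i, Xg (Suc i), Yg (Suc i), Xg i, Xg (Suc i), Xg i, Xg (Suc i), Yg i, Xg i, Xg (Suc i)] @ v, u @ [Xg (Suc i), Xg i, Xg (Suc i), Yg (Suc i), Xg i, Xg (Suc i), Yg i, Xg (Suc i), Xg i, Yg i] @ v) \<in> E"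
    using stepR[of "[Xg i, Xg (Suc i), Yg i, Xg i, Xg (Suc i), Yg i, Xg i, Xg (Suc i), Yg i]" "[]" "[Xg i, Xg (Suc i), Yg i, Xg i, Xg (Suc i), Yg i, Xg i, Xg (Suc i), Yg i]" "[Xg i, Xg (Suc i), Yg i, Xg i, Xg (Suc i)]" "[Yg i, Xg (Suc i), Xg i, Yg i]" "u @ [Xg (Suc i), Xg i, Xg (Suc i), Yg (Suc i), Xg i, Xg (Suc i)]" "[] @ v"] by (simp add: R_acb assms)
  have s4: "(u @ [Xg (Suc i), Xg i, Xg (Suc i), Yg (Suc i), Xg i, Xg (Suc i), Yg i, Xg (Suc i), Xg i, Yg i] @ v, u @ [Xg (Suc i), Xg i, Xg (Suc i), Yg (Suc i), Xg i, Yg i, Xg i, Yg i] @ v) \<in> E"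
    using stepR[of "[Yg i, Xg (Suc i), Yg i, Xg (Suc i)]" "[Yg i]" "[Xg (Suc i), Yg i, Xg (Suc i)]" "[Xg (Suc i), Yg i, Xg (Suc i)]" "[Yg i]" "u @ [Xg (Suc i), Xg i, Xg (Suc i), Yg (Suc i), Xg i]" "[Xg i, Yg i] @ v"] by (simp add: R_bc assms)
  have s5: "(u @ [Xg (Suc i), Xg i, Xg (Suc i), Yg (Suc i), Xg i, Yg i, Xg i, Yg i] @ v, u @ [Xg (Suc i), Xg i, Xg (Suc i), Yg (Suc i), Yg i, Xg i] @ v) \<in> E"
    using stepR[of "[Xg i, Yg i, Xg i, Yg i, Xg i, Yg i]" "[]" "[Xg i, Yg i, Xg i, Yg i, Xg i, Yg i]" "[Xg i, Yg i, Xg i, Yg i]" "[Yg i, Xg i]" "u @ [Xg (Suc i), Xg i, Xg (Suc i), Yg (Suc i)]" "[] @ v"] by (simp add: R_xy0 assms)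
  show ?thesis using E_trans[OF E_trans[OF E_trans[OF E_trans[OF E_trans[OF s0 s1] s2] s3] s4] s5] .
qed

lemma I2b:
  assumes "Xg i \<in> S" and "Yg i \<in> S" and "Xg (Suc i) \<in> S" and "Yg (Suc i) \<in> S"
  shows "(u @ [Yg (Suc i), Xg (Suc i), Yg i, Xg i, Xg (Suc i)] @ v, u @ [Xg (Suc i), Xg i, Xg (Suc i), Yg (Suc i), Xg (Suc i), Yg i, Xg i] @ v) \<in> E"
proof -
  have s0: "(u @ [Yg (Suc i), Xg (Suc i), Yg i, Xg i, Xg (Suc i)] @ v, u @ [Yg (Suc i), Xg (Suc i), Yg i, Xg i, Yg i, Xg i, Xg (Suc i), Yg i, Xg i, Xg (Suc i), Yg i, Xg i] @ v) \<in> E"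
    using stepR[of "[Xg i, Xg (Suc i), Yg i, Xg i, Xg (Suc i), Yg i, Xg i, Xg (Suc i), Yg i]" "[Yg i]" "[Xg (Suc i), Xg i, Yg i, Xg (Suc i), Xg i, Yg i, Xg (Suc i), Xg i]" "[Xg (Suc i)]" "[Yg i, Xg i, Xg (Suc i), Yg i, Xg i, Xg (Suc i), Yg i, Xg i]" "u @ [Yg (Suc i), Xg (Suc i), Yg i, Xg i]" "[] @ v"] by (simp add: R_acb assms)
  have s1: "(u @ [Yg (Suc i), Xg (Suc i), Yg i, Xg i, Yg i, Xg i, Xg (Suc i), Yg i, Xg i, Xg (Suc i), Yg i, Xg i] @ v, u @ [Yg (Suc i), Xg (Suc i), Xg i, Yg i, Xg (Suc i), Yg i, Xg i, Xg (Suc i), Yg i, Xg i] @ v) \<in> E"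
    using stepR[of "[Xg i, Yg i, Xg i, Yg i, Xg i, Yg i]" "[Xg i]" "[Yg i, Xg i, Yg i, Xg i, Yg i]" "[Yg i, Xg i, Yg i, Xg i]" "[Xg i, Yg i]" "u @ [Yg (Suc i), Xg (Suc i)]" "[Xg (Suc i), Yg i, Xg i, Xg (Suc i), Yg i, Xg i] @ v"] by (simp add: R_xy0 assms)
  have s2: "(u @ [Yg (Suc i), Xg (Suc i), Xg i, Yg i, Xg (Suc i), Yg i, Xg i, Xg (Suc i), Yg i, Xg i] @ v, u @ [Yg (Suc i), Xg (Suc i), Yg (Suc i), Xg i, Yg (Suc i), Yg i, Xg (Suc i), Yg i, Xg i, Xg (Suc i), Yg i, Xg i] @ v) \<in> E"
    using stepR[of "[Xg i, Yg (Suc i), Xg i, Yg (Suc i)]" "[]" "[Xg i, Yg (Suc i), Xg i, Yg (Suc i)]" "[Xg i]" "[Yg (Suc i), Xg i, Yg (Suc i)]" "u @ [Yg (Suc i), Xg (Suc i)]" "[Yg i, Xg (Suc i), Yg i, Xg i, Xg (Suc i), Yg i, Xg i] @ v"] by (simp add: R_ad assms)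
  have s3: "(u @ [Yg (Suc i), Xg (Suc i), Yg (Suc i), Xg i, Yg (Suc i), Yg i, Xg (Suc i), Yg i, Xg i, Xg (Suc i), Yg i, Xg i] @ v, u @ [Xg (Suc i), Yg (Suc i), Xg (Suc i), Xg i, Yg (Suc i), Yg i, Xg (Suc i), Yg i, Xg i, Xg (Suc i), Yg i, Xg i] @ v) \<in> E"
    using stepR[of "[Xg (Suc i), Yg (Suc i), Xg (Suc i), Yg (Suc i), Xg (Suc i), Yg (Suc i)]" "[Xg (Suc i)]" "[Yg (Suc i), Xg (Suc i), Yg (Suc i), Xg (Suc i), Yg (Suc i)]" "[Yg (Suc i), Xg (Suc i), Yg (Suc i)]" "[Xg (Suc i), Yg (Suc i), Xg (Suc i)]" "u @ []" "[Xg i, Yg (Suc i), Yg i, Xg (Suc i), Yg i, Xg i, Xg (Suc i), Yg i, Xg i] @ v"] by (simp add: R_xy1 assms)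
  have s4: "(u @ [Xg (Suc i), Yg (Suc i), Xg (Suc i), Xg i, Yg (Suc i), Yg i, Xg (Suc i), Yg i, Xg i, Xg (Suc i), Yg i, Xg i] @ v, u @ [Xg (Suc i), Yg (Suc i), Xg (Suc i), Xg i, Yg (Suc i), Xg (Suc i), Xg i, Xg (Suc i), Yg i, Xg i] @ v) \<in> E"
    using stepR[of "[Yg i, Xg (Suc i), Yg i, Xg (Suc i)]" "[]" "[Yg i, Xg (Suc i), Yg i, Xg (Suc i)]" "[Yg i, Xg (Suc i), Yg i]" "[Xg (Suc i)]" "u @ [Xg (Suc i), Yg (Suc i), Xg (Suc i), Xg i, Yg (Suc i)]" "[Xg i, Xg (Suc i), Yg i, Xg i] @ v"] by (simp add: R_bc assms)
  have s5: "(u @ [Xg (Suc i), Yg (Suc i), Xg (Suc i), Xg i, Yg (Suc i), Xg (Suc i), Xg i, Xg (Suc i), Yg i, Xg i] @ v, u @ [Xg (Suc i), Xg i, Xg (Suc i), Yg (Suc i), Xg (Suc i), Yg i, Xg i] @ v) \<in> E"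
    using stepR[of "[Xg i, Xg (Suc i), Yg (Suc i), Xg i, Xg (Suc i), Yg (Suc i), Xg i, Xg (Suc i), Yg (Suc i)]" "[]" "[Yg (Suc i), Xg (Suc i), Xg i, Yg (Suc i), Xg (Suc i), Xg i, Yg (Suc i), Xg (Suc i), Xg i]" "[Yg (Suc i), Xg (Suc i), Xg i, Yg (Suc i), Xg (Suc i), Xg i]" "[Xg i, Xg (Suc i), Yg (Suc i)]" "u @ [Xg (Suc i)]" "[Xg (Suc i), Yg i, Xg i] @ v"] by (simp add: R_acd assms)
  show ?thesis using E_trans[OF E_trans[OF E_trans[OF E_trans[OF E_trans[OF s0 s1] s2] s3] s4] s5] .
qed

lemma I4a:
  assumes "Xg i \<in> S" and "Yg i \<in> S" and "Xg (Suc i) \<in> S" and "Yg (Suc i) \<in> S"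
  shows "(u @ [Yg (Suc i), Yg i, Yg (Suc i)] @ v, u @ [Xg i, Yg i, Xg i, Yg (Suc i), Yg i, Xg i] @ v) \<in> E"
proof -
  have s0: "(u @ [Yg (Suc i), Yg i, Yg (Suc i)] @ v, u @ [Yg (Suc i), Xg i, Yg (Suc i), Yg i, Xg i, Yg (Suc i), Yg i, Xg i] @ v) \<in> E"
    using stepR[of "[Xg i, Yg i, Yg (Suc i), Xg i, Yg i, Yg (Suc i), Xg i, Yg i, Yg (Suc i)]" "[Xg i]" "[Yg i, Yg (Suc i), Xg i, Yg i, Yg (Suc i), Xg i, Yg i, Yg (Suc i)]" "[Yg i, Yg (Suc i)]" "[Xg i, Yg (Suc i), Yg i, Xg i, Yg (Suc i), Yg i, Xg i]" "u @ [Yg (Suc i)]" "[] @ v"] by (simp add: R_abd assms)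
  have s1: "(u @ [Yg (Suc i), Xg i, Yg (Suc i), Yg i, Xg i, Yg (Suc i), Yg i, Xg i] @ v, u @ [Xg i, Yg i, Xg i, Yg (Suc i), Yg i, Xg i] @ v) \<in> E"
    using stepR[of "[Xg i, Yg (Suc i), Xg i, Yg (Suc i)]" "[Xg i]" "[Yg (Suc i), Xg i, Yg (Suc i)]" "[Yg (Suc i), Xg i, Yg (Suc i)]" "[Xg i]" "u @ []" "[Yg i, Xg i, Yg (Suc i), Yg i, Xg i] @ v"] by (simp add: R_ad assms)
  show ?thesis using E_trans[OF s0 s1] .
qed

lemma I4b:
  assumes "Xg i \<in> S" and "Yg i \<in> S" and "Xg (Suc i) \<in> S" and "Yg (Suc i) \<in> S"
  shows "(u @ [Yg (Suc i), Yg i, Xg i, Yg (Suc i)] @ v, u @ [Xg i, Yg i, Xg i, Yg (Suc i), Yg i] @ v) \<in> E"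
proof -
  have s0: "(u @ [Yg (Suc i), Yg i, Xg i, Yg (Suc i)] @ v, u @ [Xg i, Yg i, Yg (Suc i), Xg i, Yg i] @ v) \<in> E"
    using stepR[of "[Xg i, Yg i, Yg (Suc i), Xg i, Yg i, Yg (Suc i), Xg i, Yg i, Yg (Suc i)]" "[]" "[Yg (Suc i), Yg i, Xg i, Yg (Suc i), Yg i, Xg i, Yg (Suc i), Yg i, Xg i]" "[Yg (Suc i), Yg i, Xg i, Yg (Suc i)]" "[Xg i, Yg i, Yg (Suc i), Xg i, Yg i]" "u @ []" "[] @ v"] by (simp add: R_abd assms)
  have s1: "(u @ [Xg i, Yg i, Yg (Suc i), Xg i, Yg i] @ v, u @ [Xg i, Yg i, Xg i, Yg (Suc i), Yg i] @ v) \<in> E"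
    using stepR[of "[Xg i, Yg (Suc i), Xg i, Yg (Suc i)]" "[Xg i]" "[Yg (Suc i), Xg i, Yg (Suc i)]" "[Yg (Suc i), Xg i]" "[Xg i, Yg (Suc i)]" "u @ [Xg i, Yg i]" "[Yg i] @ v"] by (simp add: R_ad assms)
  show ?thesis using E_trans[OF s0 s1] .
qed

lemma I5a:
  assumes "Xg i \<in> S" and "Yg i \<in> S" and "Xg (Suc i) \<in> S" and "Yg (Suc i) \<in> S"
  shows "(u @ [Yg (Suc i), Xg (Suc i), Yg i, Yg (Suc i)] @ v, u @ [Yg i, Xg (Suc i), Yg (Suc i), Xg (Suc i), Yg i] @ v) \<in> E"
proof -
  have s0: "(u @ [Yg (Suc i), Xg (Suc i), Yg i, Yg (Suc i)] @ v, u @ [Yg i, Xg (Suc i), Yg (Suc i), Yg i, Xg (Suc i)] @ v) \<in> E"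
    using stepR[of "[Xg (Suc i), Yg i, Yg (Suc i), Xg (Suc i), Yg i, Yg (Suc i), Xg (Suc i), Yg i, Yg (Suc i)]" "[Xg (Suc i), Yg i]" "[Yg (Suc i), Xg (Suc i), Yg i, Yg (Suc i), Xg (Suc i), Yg i, Yg (Suc i)]" "[Yg (Suc i), Xg (Suc i), Yg i, Yg (Suc i)]" "[Yg i, Xg (Suc i), Yg (Suc i), Yg i, Xg (Suc i)]" "u @ []" "[] @ v"] by (simp add: R_cbd assms)
  have s1: "(u @ [Yg i, Xg (Suc i), Yg (Suc i), Yg i, Xg (Suc i)] @ v, u @ [Yg i, Xg (Suc i), Yg (Suc i), Xg (Suc i), Yg i] @ v) \<in> E"
    using stepR[of "[Yg i, Xg (Suc i), Yg i, Xg (Suc i)]" "[]" "[Yg i, Xg (Suc i), Yg i, Xg (Suc i)]" "[Yg i, Xg (Suc i)]" "[Xg (Suc i), Yg i]" "u @ [Yg i, Xg (Suc i), Yg (Suc i)]" "[] @ v"] by (simp add: R_bc assms)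
  show ?thesis using E_trans[OF s0 s1] .
qed

lemma I5b:
  assumes "Xg i \<in> S" and "Yg i \<in> S" and "Xg (Suc i) \<in> S" and "Yg (Suc i) \<in> S"
  shows "(u @ [Yg (Suc i), Xg (Suc i), Yg i, Xg i, Yg (Suc i)] @ v, u @ [Yg i, Xg (Suc i), Yg (Suc i), Xg (Suc i), Yg i, Xg i] @ v) \<in> E"
proof -
  have s0: "(u @ [Yg (Suc i), Xg (Suc i), Yg i, Xg i, Yg (Suc i)] @ v, u @ [Yg i, Xg (Suc i), Yg (Suc i), Yg i, Xg (Suc i), Yg (Suc i), Xg i, Yg (Suc i)] @ v) \<in> E"
    using stepR[of "[Xg (Suc i), Yg i, Yg (Suc i), Xg (Suc i), Yg i, Yg (Suc i), Xg (Suc i), Yg i, Yg (Suc i)]" "[Xg (Suc i), Yg i]" "[Yg (Suc i), Xg (Suc i), Yg i, Yg (Suc i), Xg (Suc i), Yg i, Yg (Suc i)]" "[Yg (Suc i), Xg (Suc i), Yg i]" "[Yg i, Xg (Suc i), Yg (Suc i), Yg i, Xg (Suc i), Yg (Suc i)]" "u @ []" "[Xg i, Yg (Suc i)] @ v"] by (simp add: R_cbd assms)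
  have s1: "(u @ [Yg i, Xg (Suc i), Yg (Suc i), Yg i, Xg (Suc i), Yg (Suc i), Xg i, Yg (Suc i)] @ v, u @ [Yg i, Xg (Suc i), Yg (Suc i), Yg i, Xg (Suc i), Xg i] @ v) \<in> E"
    using stepR[of "[Xg i, Yg (Suc i), Xg i, Yg (Suc i)]" "[Xg i]" "[Yg (Suc i), Xg i, Yg (Suc i)]" "[Yg (Suc i), Xg i, Yg (Suc i)]" "[Xg i]" "u @ [Yg i, Xg (Suc i), Yg (Suc i), Yg i, Xg (Suc i)]" "[] @ v"] by (simp add: R_ad assms)
  have s2: "(u @ [Yg i, Xg (Suc i), Yg (Suc i), Yg i, Xg (Suc i), Xg i] @ v, u @ [Yg i, Xg (Suc i), Yg (Suc i), Xg (Suc i), Yg i, Xg i] @ v) \<in> E"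
    using stepR[of "[Yg i, Xg (Suc i), Yg i, Xg (Suc i)]" "[]" "[Yg i, Xg (Suc i), Yg i, Xg (Suc i)]" "[Yg i, Xg (Suc i)]" "[Xg (Suc i), Yg i]" "u @ [Yg i, Xg (Suc i), Yg (Suc i)]" "[Xg i] @ v"] by (simp add: R_bc assms)
  show ?thesis using E_trans[OF E_trans[OF s0 s1] s2] .
qed


lemma Yl: assumes "Xg j \<in> S" "Yg j \<in> S"
  shows "(u @ [Yg j, Xg j, Yg j] @ v, u @ [Xg j, Yg j, Xg j] @ v) \<in> E"
  using stepR[of "[Xg j, Yg j, Xg j, Yg j, Xg j, Yg j]" "[Yg j, Xg j, Yg j, Xg j, Yg j, Xg j]" "[]"
     "[Yg j, Xg j, Yg j]" "[Xg j, Yg j, Xg j]" u v] by (simp add: R_xyi assms)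

end

fun idx :: "gen \<Rightarrow> nat" where "idx (Xg i) = i" | "idx (Yg i) = i"

definition Bw :: "(nat \<Rightarrow> bool) \<Rightarrow> nat \<Rightarrow> gen list" where
  "Bw e j = Yg j # (if e j then [Xg j] else [])"

definition Ww :: "(nat \<Rightarrow> bool) \<Rightarrow> nat \<Rightarrow> nat \<Rightarrow> gen list" where
  "Ww e a b = concat (map (Bw e) (rev [a..<b]))"

lemma Ww_split: "a \<le> b \<Longrightarrow> b \<le> c \<Longrightarrow> Ww e a c = Ww e b c @ Ww e a b"
  unfolding Ww_def by (metis concat_append map_append rev_append upt_add_eq_append le_add_diff_inverse)

lemma Ww_empty: "Ww e a a = []" by (simp add: Ww_def)
lemma Ww_one: "Ww e a (Suc a) = Bw e a" by (simp add: Ww_def)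

lemma Ww_dec1: "k < c \<Longrightarrow> Ww e k c = Ww e (Suc k) c @ Bw e k"
  using Ww_split[of k "Suc k" c e] by (simp add: Ww_one)

lemma Ww_cong: "(\<And>j. a \<le> j \<Longrightarrow> j < b \<Longrightarrow> e j = e' j) \<Longrightarrow> Ww e a b = Ww e' a b"
  unfolding Ww_def Bw_def by (intro arg_cong[where f=concat] map_cong) auto

lemma Ww_upd: "j < a \<or> b \<le> j \<Longrightarrow> Ww (e(j := x)) a b = Ww e a b"
  by (rule Ww_cong) auto

lemma set_Ww: "t \<in> set (Ww e a b) \<Longrightarrow> a \<le> idx t \<and> idx t < b"
  unfolding Ww_def Bw_def by (auto split: if_splits)

lemma coset_word_Ww: "coset_word n k eps = Ww eps k (n+1)"
  unfolding coset_word_def Ww_def Bw_def by simp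




locale cos = pres +
  fixes K :: nat
  assumes K1: "1 \<le> K" and K2: "K \<le> n"
    and hiX: "\<And>i. K \<le> i \<Longrightarrow> i \<le> n \<Longrightarrow> Xg i \<in> S"
    and hiY: "\<And>i. K \<le> i \<Longrightarrow> i \<le> n \<Longrightarrow> Yg i \<in> S"
    and noY: "Yg (K - 1) \<notin> S"
begin

definition "S' = S - {Yg n}"
definition "XS = {Xg i | i. Xg i \<in> S}"

lemma XS_S': "XS \<subseteq> S'" unfolding XS_def S'_def by auto
lemma S'_S: "S' \<subseteq> S" unfolding S'_def by auto

lemma cm_far: "z \<in> S \<Longrightarrow> t \<in> S \<Longrightarrow> idx z + 2 \<le> idx t \<or> idx t + 2 \<le> idx z \<Longrightarrow> cm z t"
  by (cases z; cases t) (auto simp: cm_def sp_XX sp_YY sp_XY sp_YX)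

lemma cm_XY: "Xg i \<in> S \<Longrightarrow> Yg j \<in> S \<Longrightarrow> i \<noteq> j \<Longrightarrow> cm (Xg i) (Yg j) \<and> cm (Yg j) (Xg i)"
  by (auto simp: cm_def sp_XY sp_YX)

lemma set_Ww_S: "K \<le> a \<Longrightarrow> b \<le> n + 1 \<Longrightarrow> set (Ww e a b) \<subseteq> S"
proof
  fix t assume "K \<le> a" "b \<le> n + 1" "t \<in> set (Ww e a b)"
  then show "t \<in> S" unfolding Ww_def Bw_def using hiX hiY by (auto split: if_splits)
qed

lemma cm_Ww: "K \<le> a \<Longrightarrow> b \<le> n + 1 \<Longrightarrow> z \<in> S \<Longrightarrow> (idx z + 2 \<le> a \<or> b + 1 \<le> idx z) \<Longrightarrow> \<forall>t\<in>set (Ww e a b). cm z t"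
proof
  fix t assume a: "K \<le> a" "b \<le> n + 1" "z \<in> S" "idx z + 2 \<le> a \<or> b + 1 \<le> idx z" "t \<in> set (Ww e a b)"
  then have "t \<in> S" using set_Ww_S by auto
  moreover have "a \<le> idx t \<and> idx t < b" using set_Ww a by blast
  ultimately show "cm z t" using cm_far a by auto
qed

lemma lift:
  assumes "\<And>x. x \<in> A \<Longrightarrow> \<exists>h. set h \<subseteq> XS \<and> (P @ [x], h @ P) \<in> E"
  shows "set g \<subseteq> A \<Longrightarrow> \<exists>h. set h \<subseteq> XS \<and> (P @ g, h @ P) \<in> E"
proof (induction g rule: rev_induct)
  case Nil
  have "set [] \<subseteq> XS \<and> (P @ [], [] @ P) \<in> E" by (simp add: E_refl)
  then show ?case by blast
next
  case (snoc x g)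
  then obtain h1 where h1: "set h1 \<subseteq> XS" "(P @ g, h1 @ P) \<in> E" by auto
  have "x \<in> A" using snoc.prems by simp
  then obtain h2 where h2: "set h2 \<subseteq> XS" "(P @ [x], h2 @ P) \<in> E" using assms by blast
  have 1: "([] @ (P @ g) @ [x], [] @ (h1 @ P) @ [x]) \<in> E" using E_ctx[OF h1(2)] by blast
  have 2: "(h1 @ (P @ [x]) @ [], h1 @ (h2 @ P) @ []) \<in> E" using E_ctx[OF h2(2)] by blast
  have "(P @ g @ [x], (h1 @ h2) @ P) \<in> E" using Etr[OF 1 2] by simp
  then show ?case using h1 h2 by (intro exI[of _ "h1 @ h2"]) auto
qed

lemma L1: "K \<le> k \<Longrightarrow> k \<le> n + 1 \<Longrightarrow> Xg i \<in> S \<Longrightarrow> i < k \<Longrightarrow>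
   \<exists>h. set h \<subseteq> XS \<and> (Ww e k (n+1) @ [Xg i], h @ Ww e k (n+1)) \<in> E"
proof (induction "n + 1 - k" arbitrary: k i)
  case 0
  then have "k = n + 1" by simp
  then show ?case using 0 by (intro exI[of _ "[Xg i]"]) (auto simp: Ww_empty E_refl XS_def)
next
  case (Suc d)
  then have kn: "k \<le> n" by simp
  define P where "P = Ww e (Suc k) (n+1)"
  have W: "Ww e k (n+1) = P @ Bw e k" unfolding P_def using kn Ww_dec1 by simp
  have IH: "\<And>x. x \<in> {Xg i | i. Xg i \<in> S \<and> i < Suc k} \<Longrightarrow> \<exists>h. set h \<subseteq> XS \<and> (P @ [x], h @ P) \<in> E"
    unfolding P_def using Suc kn by (auto intro!: Suc.hyps(1))
  have Sk: "Xg k \<in> S" "Yg k \<in> S" using hiX hiY Suc.prems kn by auto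
  have x: "Xg i \<in> S" using Suc.prems by simp
  show ?case
  proof (cases "i + 2 \<le> k \<or> \<not> e k")
    case True
    have c: "\<forall>t\<in>set (Bw e k). cm (Xg i) t"
      using True Sk x cm_far cm_XY Suc.prems by (auto simp: Bw_def)
    have 1: "(P @ Bw e k @ [Xg i], P @ [Xg i] @ Bw e k) \<in> E"
      using E_sym[OF push[OF c, of P "[]"]] by simp
    obtain h where h: "set h \<subseteq> XS" "(P @ [Xg i], h @ P) \<in> E" using IH x Suc.prems by force
    have 2: "([] @ (P @ [Xg i]) @ Bw e k, [] @ (h @ P) @ Bw e k) \<in> E" using E_ctx[OF h(2)] by blast
    show ?thesis using h(1) Etr[OF 1 2] W by (intro exI[of _ h]) simp
  next
    case False
    then have ik: "k = Suc i" "e k" using Suc.prems by auto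
    have 1: "(P @ [Yg (Suc i), Xg (Suc i), Xg i] @ [], P @ [Xg i, Xg (Suc i), Xg i, Xg (Suc i), Yg (Suc i), Xg (Suc i)] @ []) \<in> E"
      by (rule I1) (use x Sk ik in auto)
    obtain h where h: "set h \<subseteq> XS" "(P @ [Xg i, Xg (Suc i), Xg i, Xg (Suc i)], h @ P) \<in> E"
    proof -
      have "set [Xg i, Xg (Suc i), Xg i, Xg (Suc i)] \<subseteq> {Xg i | i. Xg i \<in> S \<and> i < Suc k}"
        using x Sk ik by auto
      then show ?thesis using lift[where A="{Xg i | i. Xg i \<in> S \<and> i < Suc k}" and P=P, OF IH] that by blast
    qed
    have 2: "([] @ (P @ [Xg i, Xg (Suc i), Xg i, Xg (Suc i)]) @ [Yg (Suc i), Xg (Suc i)], [] @ (h @ P) @ [Yg (Suc i), Xg (Suc i)]) \<in> E"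
      using E_ctx[OF h(2)] by blast
    have "Bw e k = [Yg (Suc i), Xg (Suc i)]" using ik by (simp add: Bw_def)
    then show ?thesis using h(1) Etr[OF 1 2] W by (intro exI[of _ h]) simp
  qed
qed

lemma Lw: "K \<le> k \<Longrightarrow> k \<le> n + 1 \<Longrightarrow> set g \<subseteq> {Xg i | i. Xg i \<in> S \<and> i < k} \<Longrightarrow>
   \<exists>h. set h \<subseteq> XS \<and> (Ww e k (n+1) @ g, h @ Ww e k (n+1)) \<in> E"
  by (rule lift[of "{Xg i | i. Xg i \<in> S \<and> i < k}"]) (use L1 in auto)

definition apx :: "gen list \<Rightarrow> gen list \<Rightarrow> bool" where
  "apx w v \<longleftrightarrow> (\<exists>u. set u \<subseteq> S' \<and> (u @ w, v) \<in> E)"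

lemma apx_intro: "(w, h @ v) \<in> E \<Longrightarrow> set h \<subseteq> S' \<Longrightarrow> apx w v"
proof -
  assume a: "(w, h @ v) \<in> E" "set h \<subseteq> S'"
  then have hS: "set h \<subseteq> S" using S'_S by auto
  have 1: "(rev h @ w @ [], rev h @ (h @ v) @ []) \<in> E" using E_ctx[OF a(1)] by blast
  have 2: "([] @ (rev h @ h) @ v, [] @ [] @ v) \<in> E" using E_ctx[OF conjunct1[OF cancel[OF hS]]] by blast
  have "(rev h @ w, v) \<in> E" using Etr[OF 1 2] by simp
  then show ?thesis unfolding apx_def using a(2) by (intro exI[of _ "rev h"]) auto
qed

lemma W4: "k \<le> j \<Longrightarrow> Suc j \<le> n \<Longrightarrow>
   Ww e k (n+1) = Ww e (Suc (Suc j)) (n+1) @ Bw e (Suc j) @ Bw e j @ Ww e k j"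
proof -
  assume a: "k \<le> j" "Suc j \<le> n"
  have "Ww e k (n+1) = Ww e j (n+1) @ Ww e k j" using a by (intro Ww_split) auto
  also have "Ww e j (n+1) = Ww e (Suc j) (n+1) @ Bw e j" using a by (intro Ww_dec1) auto
  also have "Ww e (Suc j) (n+1) = Ww e (Suc (Suc j)) (n+1) @ Bw e (Suc j)" using a by (intro Ww_dec1) auto
  finally show ?thesis by simp
qed

lemma lstS: "K \<le> k \<Longrightarrow> k \<le> n + 1 \<Longrightarrow> set (Ww e k (n+1)) \<subseteq> S" using set_Ww_S by simp

lemma action_X:
  assumes k: "K \<le> k" "k \<le> n + 1" and x: "Xg i \<in> S"
  shows "\<exists>k' e'. K \<le> k' \<and> k' \<le> n + 1 \<and> apx (Ww e k (n+1) @ [Xg i]) (Ww e' k' (n+1))"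
proof (cases "i < k")
  case True
  obtain h where h: "set h \<subseteq> XS" "(Ww e k (n+1) @ [Xg i], h @ Ww e k (n+1)) \<in> E"
    using L1[OF k x True] by blast
  then have "apx (Ww e k (n+1) @ [Xg i]) (Ww e k (n+1))" using XS_S' by (intro apx_intro) auto
  then show ?thesis using k by blast
next
  case False
  have iN: "i \<le> n" using SX[OF x] by simp
  show ?thesis
  proof (cases "i = k")
    case True
    define P where "P = Ww e (Suc k) (n+1)"
    define e' where "e' = e(k := \<not> e k)"
    have W: "Ww e k (n+1) = P @ Bw e k" unfolding P_def using True iN Ww_dec1 by simp
    have W': "Ww e' k (n+1) = P @ Bw e' k" unfolding P_def using True iN Ww_dec1 Ww_upd e'_def by simp
    have "(Ww e k (n+1) @ [Xg i], [] @ Ww e' k (n+1)) \<in> E"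
    proof (cases "e k")
      case True
      have "(P @ [Yg k] @ [Xg k, Xg k] @ [], P @ [Yg k] @ []) \<in> E" using E_rel[OF R_sq[OF x], of "P @ [Yg k]" "[]"] \<open>i = k\<close> by simp
      then show ?thesis using W W' True \<open>i = k\<close> by (simp add: Bw_def e'_def)
    next
      case False
      then show ?thesis using W W' \<open>i = k\<close> by (simp add: Bw_def e'_def E_refl)
    qed
    then have "apx (Ww e k (n+1) @ [Xg i]) (Ww e' k (n+1))" by (rule apx_intro[where h="[]"]) simp_all
    then show ?thesis using k by blast
  next
    case False
    then obtain j where ij: "i = Suc j" "k \<le> j" using \<open>\<not> i < k\<close> by (cases i) auto
    have jn: "Suc j \<le> n" using iN ij by simp
    have Kj: "K \<le> j" using k ij by simp
    have Sj: "Xg j \<in> S" "Yg j \<in> S" "Xg (Suc j) \<in> S" "Yg (Suc j) \<in> S" using hiX hiY Kj jn by auto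
    define P where "P = Ww e (Suc (Suc j)) (n+1)"
    define Q where "Q = Ww e k j"
    have W: "Ww e k (n+1) = P @ Bw e (Suc j) @ Bw e j @ Q" unfolding P_def Q_def using W4 ij jn by simp
    have cQ: "\<forall>t\<in>set Q. cm (Xg (Suc j)) t" unfolding Q_def using cm_Ww[of k j "Xg (Suc j)"] k Sj jn by auto
    have 1: "(Ww e k (n+1) @ [Xg i], (P @ Bw e (Suc j) @ Bw e j) @ [Xg (Suc j)] @ Q @ []) \<in> E"
      using E_sym[OF push[OF cQ, of "P @ Bw e (Suc j) @ Bw e j" "[]"]] W ij by simp
    show ?thesis
    proof (cases "e j")
      case False
      note nej = this
      define e' where "e' = e(Suc j := \<not> e (Suc j))"
      have W': "Ww e' k (n+1) = P @ Bw e' (Suc j) @ Bw e j @ Q"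
        unfolding P_def Q_def e'_def using W4 ij jn Ww_upd by (simp add: Bw_def)
      have c: "\<forall>t\<in>set [Yg j]. cm (Xg (Suc j)) t" using cm_XY Sj by auto
      have 2: "(P @ Bw e (Suc j) @ [Yg j] @ [Xg (Suc j)] @ Q, P @ Bw e (Suc j) @ [Xg (Suc j)] @ [Yg j] @ Q) \<in> E"
        using E_sym[OF push[OF c, of "P @ Bw e (Suc j)" Q]] by simp
      have 3: "(P @ Bw e (Suc j) @ [Xg (Suc j)] @ [Yg j] @ Q, [] @ Ww e' k (n+1)) \<in> E"
      proof (cases "e (Suc j)")
        case True
        have "(P @ [Yg (Suc j)] @ [Xg (Suc j), Xg (Suc j)] @ ([Yg j] @ Q), P @ [Yg (Suc j)] @ ([Yg j] @ Q)) \<in> E"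
          using E_rel[OF R_sq[OF Sj(3)], of "P @ [Yg (Suc j)]" "[Yg j] @ Q"] by simp
        then show ?thesis using W' True nej by (simp add: Bw_def e'_def)
      next
        case False
        then show ?thesis using W' nej by (simp add: Bw_def e'_def E_refl)
      qed
      have 12: "(Ww e k (n+1) @ [Xg i], P @ Bw e (Suc j) @ [Xg (Suc j)] @ [Yg j] @ Q) \<in> E"
        using Etr[OF 1 2] nej by (simp add: Bw_def)
      have "(Ww e k (n+1) @ [Xg i], [] @ Ww e' k (n+1)) \<in> E"
        using E_trans[OF 12 3] .
      then have "apx (Ww e k (n+1) @ [Xg i]) (Ww e' k (n+1))" by (rule apx_intro[where h="[]"]) simp_all
      then show ?thesis using k by blast
    next
      case True
      have 2: "(P @ Bw e (Suc j) @ [Yg j, Xg j, Xg (Suc j)] @ Q,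
                P @ [Xg (Suc j), Xg j, Xg (Suc j)] @ Bw e (Suc j) @ [Yg j, Xg j] @ Q) \<in> E"
      proof (cases "e (Suc j)")
        case True
        then show ?thesis using I2b[OF Sj, of P Q] by (simp add: Bw_def)
      next
        case False
        then show ?thesis using I2a[OF Sj, of P Q] by (simp add: Bw_def)
      qed
      obtain h where h: "set h \<subseteq> XS" "(P @ [Xg (Suc j), Xg j, Xg (Suc j)], h @ P) \<in> E"
        using Lw[of "Suc (Suc j)" "[Xg (Suc j), Xg j, Xg (Suc j)]" e] Kj jn Sj unfolding P_def by auto
      have 3: "([] @ (P @ [Xg (Suc j), Xg j, Xg (Suc j)]) @ (Bw e (Suc j) @ [Yg j, Xg j] @ Q),
                [] @ (h @ P) @ (Bw e (Suc j) @ [Yg j, Xg j] @ Q)) \<in> E" using E_ctx[OF h(2)] by blast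
      have 12: "(Ww e k (n+1) @ [Xg i], P @ [Xg (Suc j), Xg j, Xg (Suc j)] @ Bw e (Suc j) @ [Yg j, Xg j] @ Q) \<in> E"
        using Etr[OF 1 2] True by (simp add: Bw_def)
      have "(Ww e k (n+1) @ [Xg i], h @ Ww e k (n+1)) \<in> E"
        using Etr[OF 12 3] True W by (simp add: Bw_def)
      then have "apx (Ww e k (n+1) @ [Xg i]) (Ww e k (n+1))" using h(1) XS_S' by (intro apx_intro) auto
      then show ?thesis using k by blast
    qed
  qed
qed

lemma action_Y:
  assumes k: "K \<le> k" "k \<le> n + 1" and y: "Yg i \<in> S"
  shows "\<exists>k' e'. K \<le> k' \<and> k' \<le> n + 1 \<and> apx (Ww e k (n+1) @ [Yg i]) (Ww e' k' (n+1))"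
proof (cases "i + 2 \<le> k")
  case True
  have c: "\<forall>t\<in>set (Ww e k (n+1)). cm (Yg i) t" using cm_Ww[of k "n+1" "Yg i" e] k y True by simp
  have "(Ww e k (n+1) @ [Yg i], [Yg i] @ Ww e k (n+1)) \<in> E"
    using E_sym[OF push[OF c, of "[]" "[]"]] by simp
  moreover have "set [Yg i] \<subseteq> S'" using y True k unfolding S'_def by auto
  ultimately have "apx (Ww e k (n+1) @ [Yg i]) (Ww e k (n+1))" by (rule apx_intro)
  then show ?thesis using k by blast
next
  case False
  have iN: "1 \<le> i" "i \<le> n" using SY[OF y] by auto
  have Ki: "K \<le> i"
  proof (rule ccontr)
    assume "\<not> K \<le> i"
    then have "i = K - 1" using False k by auto
    then show False using y noY by simp
  qed
  show ?thesis
  proof (cases "i + 1 = k")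
    case True
    define e' where "e' = e(i := False)"
    have "Ww e' i (n+1) = Ww e' (Suc i) (n+1) @ Bw e' i" using iN Ww_dec1 by simp
    also have "\<dots> = Ww e k (n+1) @ [Yg i]" using True Ww_upd[of i "Suc i" "n+1" e False]
      by (simp add: e'_def Bw_def)
    finally have "(Ww e k (n+1) @ [Yg i], [] @ Ww e' i (n+1)) \<in> E" by (simp add: E_refl)
    then have "apx (Ww e k (n+1) @ [Yg i]) (Ww e' i (n+1))" by (rule apx_intro) simp
    then show ?thesis using Ki iN by auto
  next
    case False
    show ?thesis
    proof (cases "i = k")
      case True
      define P where "P = Ww e (Suc k) (n+1)"
      have W: "Ww e k (n+1) = P @ Bw e k" unfolding P_def using True iN Ww_dec1 by simp
      have Sk: "Xg k \<in> S" "Yg k \<in> S" using hiX hiY True Ki iN by auto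
      show ?thesis
      proof (cases "e k")
        case False
        have "(P @ [Yg k, Yg k] @ [], P @ []) \<in> E" using E_rel[OF R_sq[OF Sk(2)], of P "[]"] .
        then have "(Ww e k (n+1) @ [Yg i], [] @ P) \<in> E" using W False True by (simp add: Bw_def)
        then have "apx (Ww e k (n+1) @ [Yg i]) (Ww e (Suc k) (n+1))" unfolding P_def by (rule apx_intro) simp
        then show ?thesis using True Ki iN by (intro exI[of _ "Suc k"] exI[of _ e]) auto
      next
        case True
        have 1: "(P @ [Yg k, Xg k, Yg k] @ [], P @ [Xg k, Yg k, Xg k] @ []) \<in> E" using Yl[OF Sk] .
        obtain h where h: "set h \<subseteq> XS" "(P @ [Xg k], h @ P) \<in> E"
          using L1[of "Suc k" "k" e] Sk Ki True \<open>i = k\<close> iN unfolding P_def by auto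
        have 2: "([] @ (P @ [Xg k]) @ [Yg k, Xg k], [] @ (h @ P) @ [Yg k, Xg k]) \<in> E" using E_ctx[OF h(2)] .
        have "(Ww e k (n+1) @ [Yg i], h @ Ww e k (n+1)) \<in> E"
          using Etr[OF 1 2] W True \<open>i = k\<close> by (simp add: Bw_def)
        then have "apx (Ww e k (n+1) @ [Yg i]) (Ww e k (n+1))" using h(1) XS_S' by (intro apx_intro) auto
        then show ?thesis using k by blast
      qed
    next
      case False
      then obtain j where ij: "i = Suc j" "k \<le> j" using \<open>i + 1 \<noteq> k\<close> \<open>\<not> i + 2 \<le> k\<close> by (cases i) auto
      have jn: "Suc j \<le> n" using iN ij by simp
      have Kj: "K \<le> j" using k ij by simp
      have Sj: "Xg j \<in> S" "Yg j \<in> S" "Xg (Suc j) \<in> S" "Yg (Suc j) \<in> S" using hiX hiY Kj jn by auto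
      have Yj: "Yg j \<in> S'" "Xg j \<in> S'" using Sj jn unfolding S'_def by auto
      define P where "P = Ww e (Suc (Suc j)) (n+1)"
      define Q where "Q = Ww e k j"
      have W: "Ww e k (n+1) = P @ Bw e (Suc j) @ Bw e j @ Q" unfolding P_def Q_def using W4 ij jn by simp
      have cQ: "\<forall>t\<in>set Q. cm (Yg (Suc j)) t" unfolding Q_def using cm_Ww[of k j "Yg (Suc j)"] k Sj jn by auto
      have 1: "(Ww e k (n+1) @ [Yg i], (P @ Bw e (Suc j) @ Bw e j) @ [Yg (Suc j)] @ Q @ []) \<in> E"
        using E_sym[OF push[OF cQ, of "P @ Bw e (Suc j)  @ Bw e j" "[]"]] W ij by simp
      have cP: "\<forall>z\<in>set [Xg j, Yg j, Xg j]. \<forall>t\<in>set P. cm z t"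
        unfolding P_def using cm_Ww[of "Suc (Suc j)" "n+1" _ e] Kj Sj by auto
      have cPb: "\<forall>z\<in>set [Yg j]. \<forall>t\<in>set P. cm z t" using cP by simp
      show ?thesis
      proof (cases "e (Suc j)")
        case False
        note nej1 = this
        define e' where "e' = e(j := \<not> e j)"
        have W': "Ww e' k (n+1) = P @ Bw e (Suc j) @ Bw e' j @ Q"
          unfolding P_def Q_def e'_def using W4 ij jn Ww_upd by (simp add: Bw_def)
        have 2: "(P @ Bw e (Suc j) @ Bw e j @ [Yg (Suc j)] @ Q,
                  P @ [Xg j, Yg j, Xg j] @ Bw e (Suc j) @ Bw e' j @ Q) \<in> E"
        proof (cases "e j")
          case True
          then show ?thesis using I4b[OF Sj, of P Q] nej1 by (simp add: Bw_def e'_def)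
        next
          case False
          then show ?thesis using I4a[OF Sj, of P Q] nej1 by (simp add: Bw_def e'_def)
        qed
        have 3: "([] @ ([Xg j, Yg j, Xg j] @ P) @ (Bw e (Suc j) @ Bw e' j @ Q),
                  [] @ (P @ [Xg j, Yg j, Xg j]) @ (Bw e (Suc j) @ Bw e' j @ Q)) \<in> E"
          using pushw[OF cP, of "[]" "Bw e (Suc j) @ Bw e' j @ Q"] by simp
        have 12: "(Ww e k (n+1) @ [Yg i], P @ [Xg j, Yg j, Xg j] @ Bw e (Suc j) @ Bw e' j @ Q) \<in> E"
          using Etr[OF 1 2] by simp
        have "(Ww e k (n+1) @ [Yg i], [Xg j, Yg j, Xg j] @ Ww e' k (n+1)) \<in> E"
          using Etr[OF 12 E_sym[OF 3]] W' by simp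
        then have "apx (Ww e k (n+1) @ [Yg i]) (Ww e' k (n+1))" using Yj by (rule_tac apx_intro[where h="[Xg j, Yg j, Xg j]"]) auto
        then show ?thesis using k by blast
      next
        case True
        note ej1 = this
        have 2: "(P @ Bw e (Suc j) @ Bw e j @ [Yg (Suc j)] @ Q,
                  P @ [Yg j, Xg (Suc j)] @ Bw e (Suc j) @ Bw e j @ Q) \<in> E"
        proof (cases "e j")
          case True
          then show ?thesis using I5b[OF Sj, of P Q] ej1 by (simp add: Bw_def)
        next
          case False
          then show ?thesis using I5a[OF Sj, of P Q] ej1 by (simp add: Bw_def)
        qed
        obtain h where h: "set h \<subseteq> XS" "(P @ [Xg (Suc j)], h @ P) \<in> E"
          using L1[of "Suc (Suc j)" "Suc j" e] Kj jn Sj unfolding P_def by auto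
        have 3: "([] @ [Yg j] @ P @ [Xg (Suc j)] @ Bw e (Suc j) @ Bw e j @ Q,
                  [] @ P @ [Yg j] @ [Xg (Suc j)] @ Bw e (Suc j) @ Bw e j @ Q) \<in> E"
          using pushw[OF cPb] by blast
        have 4: "([Yg j] @ (P @ [Xg (Suc j)]) @ (Bw e (Suc j) @ Bw e j @ Q),
                  [Yg j] @ (h @ P) @ (Bw e (Suc j) @ Bw e j @ Q)) \<in> E" using E_ctx[OF h(2)] .
        have 12: "(Ww e k (n+1) @ [Yg i], P @ [Yg j, Xg (Suc j)] @ Bw e (Suc j) @ Bw e j @ Q) \<in> E"
          using Etr[OF 1 2] by simp
        have 123: "(Ww e k (n+1) @ [Yg i], [Yg j] @ P @ [Xg (Suc j)] @ Bw e (Suc j) @ Bw e j @ Q) \<in> E"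
          using Etr[OF 12 E_sym[OF 3]] by simp
        have "(Ww e k (n+1) @ [Yg i], (Yg j # h) @ Ww e k (n+1)) \<in> E"
          using Etr[OF 123 4] W by simp
        moreover have "set (Yg j # h) \<subseteq> S'" using h(1) XS_S' Yj by auto
        ultimately have "apx (Ww e k (n+1) @ [Yg i]) (Ww e k (n+1))" by (rule apx_intro)
        then show ?thesis using k by blast
      qed
    qed
  qed
qed

end



context pres
begin

abbreviation "G \<equiv> presented_group S R"
abbreviation "cls \<equiv> word_elt R"

lemma cls_eq: "(a, b) \<in> E \<Longrightarrow> cls a = cls b"
  unfolding word_elt_def using E_trans E_sym by blast

lemma cls_mem: "x \<in> cls a \<longleftrightarrow> (a, x) \<in> E" unfolding word_elt_def by simp

lemma carrier_G: "carrier G = {cls w | w. set w \<subseteq> S}"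
  unfolding presented_group_def quotient_def word_elt_def by (auto simp: lists_eq_set)

lemma one_G: "\<one>\<^bsub>G\<^esub> = cls []" unfolding presented_group_def word_elt_def by simp

lemma mult_G: "cls a \<otimes>\<^bsub>G\<^esub> cls b = cls (a @ b)"
proof -
  have "\<And>x y. x \<in> cls a \<Longrightarrow> y \<in> cls b \<Longrightarrow> word_eq R `` {x @ y} = cls (a @ b)"
  proof -
    fix x y assume "x \<in> cls a" "y \<in> cls b"
    then have 1: "(a, x) \<in> E" "(b, y) \<in> E" by (auto simp: cls_mem)
    have "([] @ a @ b, [] @ x @ b) \<in> E" using E_ctx[OF 1(1)] .
    moreover have "(x @ b @ [], x @ y @ []) \<in> E" using E_ctx[OF 1(2)] .
    ultimately have "(a @ b, x @ y) \<in> E" using E_trans by simp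
    then show "word_eq R `` {x @ y} = cls (a @ b)" using cls_eq[of "a @ b" "x @ y"] by (simp add: word_elt_def)
  qed
  moreover have "a \<in> cls a" "b \<in> cls b" by (auto simp: cls_mem E_refl)
  ultimately show ?thesis unfolding presented_group_def by auto
qed

lemma group_G: "group G"
proof (rule groupI)
  fix x y assume "x \<in> carrier G" "y \<in> carrier G"
  then obtain a b where "x = cls a" "y = cls b" "set a \<subseteq> S" "set b \<subseteq> S" by (auto simp: carrier_G)
  then show "x \<otimes>\<^bsub>G\<^esub> y \<in> carrier G" by (auto simp: mult_G carrier_G intro!: exI[of _ "a @ b"])
next
  show "\<one>\<^bsub>G\<^esub> \<in> carrier G" by (auto simp: one_G carrier_G intro!: exI[of _ "[]"])
next
  fix x y z assume "x \<in> carrier G" "y \<in> carrier G" "z \<in> carrier G"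
  then obtain a b c where "x = cls a" "y = cls b" "z = cls c" by (auto simp: carrier_G)
  then show "x \<otimes>\<^bsub>G\<^esub> y \<otimes>\<^bsub>G\<^esub> z = x \<otimes>\<^bsub>G\<^esub> (y \<otimes>\<^bsub>G\<^esub> z)" by (simp add: mult_G)
next
  fix x assume "x \<in> carrier G"
  then obtain a where "x = cls a" by (auto simp: carrier_G)
  then show "\<one>\<^bsub>G\<^esub> \<otimes>\<^bsub>G\<^esub> x = x" by (simp add: one_G mult_G)
next
  fix x assume "x \<in> carrier G"
  then obtain a where a: "x = cls a" "set a \<subseteq> S" by (auto simp: carrier_G)
  have "cls (rev a) \<otimes>\<^bsub>G\<^esub> x = \<one>\<^bsub>G\<^esub>"
    using a cls_eq[OF conjunct1[OF cancel[OF a(2)]]] by (simp add: mult_G one_G)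
  moreover have "cls (rev a) \<in> carrier G" using a by (auto simp: carrier_G intro!: exI[of _ "rev a"])
  ultimately show "\<exists>y\<in>carrier G. y \<otimes>\<^bsub>G\<^esub> x = \<one>\<^bsub>G\<^esub>" by blast
qed

end

context cos
begin

definition "Hs = generate G ((\<lambda>z. cls [z]) ` S')"

lemma cls_list: "set u \<subseteq> S' \<Longrightarrow> cls u \<in> Hs"
proof (induction u)
  case Nil then show ?case unfolding Hs_def using generate.one[of G] one_G by simp
next
  case (Cons z u)
  have "cls [z] \<in> Hs" unfolding Hs_def using Cons.prems by (auto intro: generate.incl)
  then have "cls [z] \<otimes>\<^bsub>G\<^esub> cls u \<in> Hs" using Cons unfolding Hs_def by (auto intro: generate.eng)
  then show ?case by (simp add: mult_G)
qed

lemma Hs_eq: "Hs = {cls u | u. set u \<subseteq> S'}"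
proof
  show "Hs \<subseteq> {cls u | u. set u \<subseteq> S'}"
  proof
    fix x assume "x \<in> Hs"
    then show "x \<in> {cls u | u. set u \<subseteq> S'}" unfolding Hs_def
    proof (induction rule: generate.induct)
      case one then show ?case by (auto simp: one_G intro!: exI[of _ "[]"])
    next
      case (incl h)
      then obtain z where "h = cls [z]" "z \<in> S'" by auto
      then show ?case by (auto intro!: exI[of _ "[z]"])
    next
      case (inv h)
      then obtain z where z: "h = cls [z]" "z \<in> S'" by auto
      have zS: "z \<in> S" using z S'_S by auto
      have "cls [z] \<otimes>\<^bsub>G\<^esub> h = \<one>\<^bsub>G\<^esub>"
        using z cls_eq[OF E_rel[OF R_sq[OF zS], of "[]" "[]"]] by (simp add: mult_G one_G)
      moreover have "h \<in> carrier G" "cls [z] \<in> carrier G" using z zS by (auto simp: carrier_G intro!: exI[of _ "[z]"])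
      ultimately have "inv\<^bsub>G\<^esub> h = cls [z]" using group.inv_equality[OF group_G] by blast
      then show ?case using z by (auto intro!: exI[of _ "[z]"])
    next
      case (eng h1 h2)
      then obtain u1 u2 where "h1 = cls u1" "set u1 \<subseteq> S'" "h2 = cls u2" "set u2 \<subseteq> S'" by auto
      then show ?case by (auto simp: mult_G intro!: exI[of _ "u1 @ u2"])
    qed
  qed
next
  show "{cls u | u. set u \<subseteq> S'} \<subseteq> Hs" using cls_list by auto
qed

lemma rcos_eq: "Hs #>\<^bsub>G\<^esub> cls w = {cls (u @ w) | u. set u \<subseteq> S'}"
  unfolding r_coset_def Hs_eq
  apply (auto simp: mult_G)
  subgoal for u by (rule exI[of _ "cls u"]) (auto simp: mult_G)
  done

lemma rcos_apx: "apx w v \<Longrightarrow> Hs #>\<^bsub>G\<^esub> cls w = Hs #>\<^bsub>G\<^esub> cls v"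
proof -
  assume "apx w v"
  then obtain u0 where u0: "set u0 \<subseteq> S'" "(u0 @ w, v) \<in> E" unfolding apx_def by auto
  have u0S: "set u0 \<subseteq> S" using u0 S'_S by auto
  show ?thesis unfolding rcos_eq
  proof safe
    fix u assume u: "set u \<subseteq> S'"
    have "(u @ rev u0 @ (u0 @ w), u @ [] @ w) \<in> E"
      using E_ctx[OF conjunct1[OF cancel[OF u0S]], of "u" w] by simp
    moreover have "(u @ rev u0 @ (u0 @ w), (u @ rev u0) @ v @ []) \<in> E"
      using E_ctx[OF u0(2), of "u @ rev u0" "[]"] by simp
    ultimately have "cls (u @ w) = cls ((u @ rev u0) @ v)" using cls_eq E_trans E_sym by (metis append_Nil append_Nil2)
    moreover have "set (u @ rev u0) \<subseteq> S'" using u u0 by auto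
    ultimately show "\<exists>u'. cls (u @ w) = cls (u' @ v) \<and> set u' \<subseteq> S'" by blast
  next
    fix u assume u: "set u \<subseteq> S'"
    have "(u @ (u0 @ w) @ [], u @ v @ []) \<in> E" using E_ctx[OF u0(2)] .
    then have "cls (u @ v) = cls ((u @ u0) @ w)" using cls_eq E_sym by simp
    moreover have "set (u @ u0) \<subseteq> S'" using u u0 by auto
    ultimately show "\<exists>u'. cls (u @ v) = cls (u' @ w) \<and> set u' \<subseteq> S'" by blast
  qed
qed

lemma main_words: "set w \<subseteq> S \<Longrightarrow> \<exists>k e. K \<le> k \<and> k \<le> n + 1 \<and> apx w (Ww e k (n+1))"
proof (induction w rule: rev_induct)
  case Nil
  have "apx [] (Ww (\<lambda>_. False) (n+1) (n+1))" unfolding apx_def by (auto simp: Ww_empty E_refl intro!: exI[of _ "[]"])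
  then have "K \<le> n + 1 \<and> n + 1 \<le> n + 1 \<and> apx [] (Ww (\<lambda>_. False) (n+1) (n+1))" using K2 by simp
  then show ?case by blast
next
  case (snoc z w)
  then obtain k e u where a: "K \<le> k" "k \<le> n + 1" "set u \<subseteq> S'" "(u @ w, Ww e k (n+1)) \<in> E"
    unfolding apx_def by auto
  have z: "z \<in> S" using snoc.prems by simp
  obtain k' e' where b: "K \<le> k'" "k' \<le> n + 1" "apx (Ww e k (n+1) @ [z]) (Ww e' k' (n+1))"
    using action_X[OF a(1,2)] action_Y[OF a(1,2)] z by (cases z) blast+
  then obtain u' where c: "set u' \<subseteq> S'" "(u' @ Ww e k (n+1) @ [z], Ww e' k' (n+1)) \<in> E" unfolding apx_def by auto
  have "(u' @ (u @ w) @ [z], u' @ Ww e k (n+1) @ [z]) \<in> E" using E_ctx[OF a(4)] .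
  then have "((u' @ u) @ w @ [z], Ww e' k' (n+1)) \<in> E" using E_trans c(2) by simp
  then have "apx (w @ [z]) (Ww e' k' (n+1))" unfolding apx_def using a(3) c(1) by (intro exI[of _ "u' @ u"]) auto
  then show ?case using b by blast
qed

lemma cosets: "rcosets\<^bsub>G\<^esub> Hs = {Hs} \<union> {Hs #>\<^bsub>G\<^esub> cls (coset_word n k eps) | k eps. K \<le> k \<and> k \<le> n}"
proof
  have H0: "Hs #>\<^bsub>G\<^esub> cls [] = Hs" using rcos_eq[of "[]"] Hs_eq by simp
  show "rcosets\<^bsub>G\<^esub> Hs \<subseteq> {Hs} \<union> {Hs #>\<^bsub>G\<^esub> cls (coset_word n k eps) | k eps. K \<le> k \<and> k \<le> n}"
  proof
    fix x assume "x \<in> rcosets\<^bsub>G\<^esub> Hs"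
    then obtain w where w: "x = Hs #>\<^bsub>G\<^esub> cls w" "set w \<subseteq> S" unfolding RCOSETS_def carrier_G by auto
    then obtain k e where ke: "K \<le> k" "k \<le> n + 1" "apx w (Ww e k (n+1))" using main_words by blast
    then have x: "x = Hs #>\<^bsub>G\<^esub> cls (Ww e k (n+1))" using w rcos_apx by simp
    show "x \<in> {Hs} \<union> {Hs #>\<^bsub>G\<^esub> cls (coset_word n k eps) | k eps. K \<le> k \<and> k \<le> n}"
    proof (cases "k = n + 1")
      case True then show ?thesis using x H0 by (simp add: Ww_empty)
    next
      case False then show ?thesis using x ke by (auto simp: coset_word_Ww)
    qed
  qed
next
  have H0: "Hs #>\<^bsub>G\<^esub> cls [] = Hs" using rcos_eq[of "[]"] Hs_eq by simp
  have "cls [] \<in> carrier G" by (auto simp: carrier_G)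
  then have "Hs \<in> rcosets\<^bsub>G\<^esub> Hs" using H0 unfolding RCOSETS_def by force
  moreover have "\<And>k eps. K \<le> k \<Longrightarrow> k \<le> n \<Longrightarrow> Hs #>\<^bsub>G\<^esub> cls (coset_word n k eps) \<in> rcosets\<^bsub>G\<^esub> Hs"
  proof -
    fix k eps assume "K \<le> k" "k \<le> n"
    then have "set (coset_word n k eps) \<subseteq> S" using lstS by (simp add: coset_word_Ww)
    then have "cls (coset_word n k eps) \<in> carrier G" by (auto simp: carrier_G)
    then show "Hs #>\<^bsub>G\<^esub> cls (coset_word n k eps) \<in> rcosets\<^bsub>G\<^esub> Hs" unfolding RCOSETS_def by blast
  qed
  ultimately show "{Hs} \<union> {Hs #>\<^bsub>G\<^esub> cls (coset_word n k eps) | k eps. K \<le> k \<and> k \<le> n} \<subseteq> rcosets\<^bsub>G\<^esub> Hs"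
    by blast
qed

end



lemma sum_take_le: "i \<le> length l - 1 \<Longrightarrow> sum_list (take i (l::nat list)) \<le> sum_list (butlast l)"
proof (cases "l = []")
  case True then show ?thesis by simp
next
  case False
  assume i: "i \<le> length l - 1"
  have "i < length l" using i False by (cases l) auto
  then have "take i l = take i (butlast l)" using take_butlast[of i l] by simp
  moreover have "sum_list (take i (butlast l)) \<le> sum_list (butlast l)"
    by (metis append_take_drop_id le_add1 sum_list_append)
  ultimately show ?thesis by simp
qed

lemma stopover_le: "x \<in> stopover l \<Longrightarrow> x \<le> sum_list (butlast l)"
  unfolding stopover_def using sum_take_le by auto

lemma sum_butlast: "l \<noteq> [] \<Longrightarrow> sum_list (butlast l) + last l = sum_list (l::nat list)"
  by (metis append_butlast_last_id sum_list_append sum_list_simps(1) sum_list_simps(2) add_0_right)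

lemma stopover_butlast: "length l \<ge> 2 \<Longrightarrow> sum_list (butlast l) \<in> stopover l"
  unfolding stopover_def by (rule CollectI, rule exI[of _ "length l - 1"]) (auto simp: butlast_conv_take)

lemma stopover_mu':
  assumes "mu \<noteq> []" "1 < last mu"
  shows "stopover (butlast mu @ [last mu - 1, 1]) = insert (sum_list mu - 1) (stopover mu)"
proof -
  let ?m = "length mu" and ?b = "butlast mu" and ?c = "last mu"
  have lb: "length ?b = ?m - 1" by simp
  have m1: "?m - (?m - 1) = 1" using assms(1) by (cases mu) auto
  have sb: "sum_list ?b + ?c = sum_list mu" using sum_butlast assms by simp
  have tk: "\<And>i. i \<le> ?m - 1 \<Longrightarrow> take i (?b @ [?c - 1, 1]) = take i mu"
  proof -
    fix i assume i: "i \<le> ?m - 1"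
    have "i < ?m" using i assms(1) by (cases mu) auto
    then show "take i (?b @ [?c - 1, 1]) = take i mu" using take_butlast[of i mu] i by simp
  qed
  show ?thesis
  proof
    show "stopover (?b @ [?c - 1, 1]) \<subseteq> insert (sum_list mu - 1) (stopover mu)"
    proof
      fix x assume "x \<in> stopover (?b @ [?c - 1, 1])"
      then obtain i where i: "x = sum_list (take i (?b @ [?c - 1, 1]))" "1 \<le> i" "i \<le> ?m"
        unfolding stopover_def using assms by auto
      show "x \<in> insert (sum_list mu - 1) (stopover mu)"
      proof (cases "i \<le> ?m - 1")
        case True
        then show ?thesis using i tk unfolding stopover_def by auto
      next
        case False
        then have "i = ?m" using i by simp
        then have "take i (?b @ [?c - 1, 1]) = ?b @ [?c - 1]" using assms lb m1
          by (simp add: take_append)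
        then have "x = sum_list mu - 1" using i sb assms by simp
        then show ?thesis by simp
      qed
    qed
  next
    show "insert (sum_list mu - 1) (stopover mu) \<subseteq> stopover (?b @ [?c - 1, 1])"
    proof
      fix x assume x: "x \<in> insert (sum_list mu - 1) (stopover mu)"
      show "x \<in> stopover (?b @ [?c - 1, 1])"
      proof (cases "x = sum_list mu - 1")
        case True
        have "take ?m (?b @ [?c - 1, 1]) = ?b @ [?c - 1]" using assms lb m1 by (simp add: take_append)
        then have "x = sum_list (take ?m (?b @ [?c - 1, 1]))" using True sb assms by simp
        moreover have "1 \<le> ?m" using assms by (cases mu) auto
        moreover have "?m \<le> length (?b @ [?c - 1, 1]) - 1" by simp
        ultimately show ?thesis unfolding stopover_def by blast
      next
        case False
        then obtain i where i: "x = sum_list (take i mu)" "1 \<le> i" "i \<le> ?m - 1"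
          using x unfolding stopover_def by auto
        then show ?thesis using tk unfolding stopover_def by (auto intro!: exI[of _ i])
      qed
    qed
  qed
qed

theorem proposition4:
  fixes n :: nat and lam mu :: "nat list"
  assumes "n \<ge> 1"
    and "decomposition lam (n + 1)" and "decomposition mu (n + 1)"
    and "lam \<noteq> []" and "mu \<noteq> []"
    and "1 < last mu" and "last mu \<le> last lam"
  shows "let mu' = butlast mu @ [last mu - 1, 1];
             G = A2 n (S_set n lam mu);
             R = relators_on n (S_set n lam mu);
             H = generate G ((\<lambda>z. word_elt R [z]) ` S_set n lam mu')
         in rcosets\<^bsub>G\<^esub> H =
              {H} \<union> {H #>\<^bsub>G\<^esub> word_elt R (coset_word n k eps) | k eps.
                        n + 2 - last mu \<le> k \<and> k \<le> n}"
proof -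
  let ?S = "S_set n lam mu"
  let ?K = "n + 2 - last mu"
  have slam: "sum_list lam = n + 1" and smu: "sum_list mu = n + 1"
    using assms(2,3) unfolding decomposition_def by auto
  have cle: "last mu \<le> n + 1" using smu assms(5) member_le_sum_list[of "last mu" mu] by simp
  have bmu: "sum_list (butlast mu) = n + 1 - last mu" using sum_butlast[OF assms(5)] smu by simp
  have blam: "sum_list (butlast lam) = n + 1 - last lam" using sum_butlast[OF assms(4)] slam by simp
  have stmu: "\<And>x. x \<in> stopover mu \<Longrightarrow> x \<le> ?K - 1" using stopover_le bmu by fastforce
  have stlam: "\<And>x. x \<in> stopover lam \<Longrightarrow> x \<le> ?K - 1" using stopover_le blam assms(7) by fastforce
  have gens: "?S \<subseteq> gens n" unfolding S_set_def gens_def by auto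
  interpret cos n ?S ?K
  proof
    show "?S \<subseteq> gens n" by (rule gens)
    show "1 \<le> ?K" using cle by simp
    show "?K \<le> n" using assms(6) by simp
    show "\<And>i. ?K \<le> i \<Longrightarrow> i \<le> n \<Longrightarrow> Xg i \<in> ?S"
      unfolding S_set_def using stlam assms(6) cle by fastforce
    show "\<And>i. ?K \<le> i \<Longrightarrow> i \<le> n \<Longrightarrow> Yg i \<in> ?S"
      unfolding S_set_def using stmu assms(6) cle by fastforce
    show "Yg (?K - 1) \<notin> ?S"
    proof
      assume y: "Yg (?K - 1) \<in> ?S"
      then have k1: "1 \<le> ?K - 1" unfolding S_set_def by auto
      have "length mu \<ge> 2"
      proof (rule ccontr)
        assume "\<not> length mu \<ge> 2"
        moreover have "length mu \<noteq> 0" using assms(5) by simp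
        ultimately have "length mu = 1" by linarith
        then have "mu = [last mu]" by (cases mu) auto
        then have "last mu = n + 1" using smu by (metis sum_list_simps add_0_right)
        then show False using k1 by simp
      qed
      then have "?K - 1 \<in> stopover mu" using stopover_butlast[of mu] bmu by simp
      then show False using y unfolding S_set_def by auto
    qed
  qed
  have S'd: "S' = ?S - {Yg n}" by (simp add: S'_def)
  have "S_set n lam (butlast mu @ [last mu - 1, 1]) = ?S - {Yg n}"
    unfolding S_set_def stopover_mu'[OF assms(5,6)] smu using stmu assms(6) cle by fastforce
  then have S'eq: "S_set n lam (butlast mu @ [last mu - 1, 1]) = S'" using S'd by simp
  show ?thesis unfolding Let_def A2_def S'eq using cosets unfolding Hs_def .
qed


end
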